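(* Let $\mathbb{K}$ be a field and $n\geq 2$. If $\mathbb{K}$ has characteristic not $2$, every range-compatible group homomorphism $F:\mathrm{S}_n(\mathbb{K})\to\mathbb{K}^n$ is local. If $\mathbb{K}$ has characteristic $2$, the range-compatible group homomorphisms $F:\mathrm{S}_n(\mathbb{K})\to\mathbb{K}^n$ are exactly the maps of the form $$M\longmapsto MX+\begin{bmatrix}\alpha(m_{1,1}) & \alpha(m_{2,2}) & \cdots & \alpha(m_{n,n})\end{bmatrix}^T$$ with $X\in\mathbb{K}^n$ and $\alpha$ a root-linear form on $\mathbb{K}$ (in particular every such map with $X=0$ is range-compatible). Moreover, if $\mathbb{K}$ has more than $2$ elements, every range-compatible linear map on $\mathrm{S}_n(\mathbb{K})$ is local.
   Context: $\mathrm{S}_n(\mathbb{K})$ is the space of $n\times n$ symmetric matrices over $\mathbb{K}$; $m_{i,j}$ is the $(i,j)$ entry of $M$. A map $F:\mathcal{S}\to\mathbb{K}^n$ on a set of $n\times p$ matrices is range-compatible when $F(M)\in\operatorname{im}M$ for all $M$, and local when there is $X\in\mathbb{K}^p$ with $F(M)=MX$ for all $M$. In characteristic $2$, a map $\alpha:\mathbb{K}\to\mathbb{K}$ is a root-linear form when it is additive and $\alpha(\lambda^2x)=\lambda\alpha(x)$ for all $\lambda,x\in\mathbb{K}$. *)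

theory Defs
  imports "HOL-Analysis.Analysis"
begin

definition sym_mats :: "('a::field ^'n ^'n) set" where
  "sym_mats = {M. transpose M = M}"

definition range_compatible :: "('a::field ^'n ^'m) set \<Rightarrow> ('a ^'n ^'m \<Rightarrow> 'a ^'m) \<Rightarrow> bool" where
  "range_compatible S F \<longleftrightarrow> (\<forall>M\<in>S. F M \<in> range (\<lambda>x. M *v x))"

definition local_map :: "('a::field ^'n ^'m) set \<Rightarrow> ('a ^'n ^'m \<Rightarrow> 'a ^'m) \<Rightarrow> bool" where
  "local_map S F \<longleftrightarrow> (\<exists>X. \<forall>M\<in>S. F M = M *v X)"

definition additive_on :: "('a::field ^'n ^'m) set \<Rightarrow> ('a ^'n ^'m \<Rightarrow> 'a ^'m) \<Rightarrow> bool" where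
  "additive_on S F \<longleftrightarrow> (\<forall>M\<in>S. \<forall>N\<in>S. F (M + N) = F M + F N)"

definition linear_on :: "('a::field ^'n ^'m) set \<Rightarrow> ('a ^'n ^'m \<Rightarrow> 'a ^'m) \<Rightarrow> bool" where
  "linear_on S F \<longleftrightarrow> additive_on S F \<and> (\<forall>c. \<forall>M\<in>S. F (\<chi> i j. c * M $ i $ j) = c *s F M)"

definition root_linear :: "('a::field \<Rightarrow> 'a) \<Rightarrow> bool" where
  "root_linear \<alpha> \<longleftrightarrow> (\<forall>x y. \<alpha> (x + y) = \<alpha> x + \<alpha> y) \<and> (\<forall>l x. \<alpha> (l^2 * x) = l * \<alpha> x)"

end

theory Submission imports Defs begin

definition B :: "'n \<Rightarrow> 'n \<Rightarrow> 'a::field \<Rightarrow> 'a^'n^'n" where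
  "B i j a = (\<chi> r c. if (r = i \<and> c = j) \<or> (r = j \<and> c = i) then a else 0)"

lemma sym_iff: "M \<in> sym_mats \<longleftrightarrow> (\<forall>i j. M $ i $ j = M $ j $ i)"
  unfolding sym_mats_def transpose_def by (auto simp: vec_eq_iff)

lemma B_nth: "B i j a $ r $ c = (if (r = i \<and> c = j) \<or> (r = j \<and> c = i) then a else 0)"
  unfolding B_def by simp

lemma B_sym: "B i j a \<in> sym_mats"
  unfolding sym_iff B_def by auto

lemma B_comm: "B j i a = B i j a"
  unfolding B_def by (auto simp: vec_eq_iff)

lemma B_add: "B i j (a + b) = B i j a + B i j b"
  unfolding B_def by (auto simp: vec_eq_iff)

lemma sym_add: "M \<in> sym_mats \<Longrightarrow> N \<in> sym_mats \<Longrightarrow> M + N \<in> sym_mats"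
  unfolding sym_iff by auto

lemma sym_zero: "0 \<in> sym_mats"
  unfolding sym_iff by auto

lemma sym_sum: "finite A \<Longrightarrow> (\<And>x. x \<in> A \<Longrightarrow> g x \<in> sym_mats) \<Longrightarrow> sum g A \<in> sym_mats"
  by (induction A rule: finite_induct) (auto intro: sym_add sym_zero)

lemma add_zero: "additive_on sym_mats F \<Longrightarrow> F 0 = 0"
  unfolding additive_on_def using sym_zero by (metis add_cancel_right_right add_0)

lemma add_sum: assumes "additive_on sym_mats F" "finite A" "\<And>x. x \<in> A \<Longrightarrow> g x \<in> sym_mats"
  shows "F (sum g A) = (\<Sum>x\<in>A. F (g x))"
  using assms(2,3)
proof (induction A rule: finite_induct)
  case empty then show ?case using add_zero[OF assms(1)] by simp
next
  case (insert x A)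
  have "F (sum g (insert x A)) = F (g x + sum g A)" using insert by simp
  also have "\<dots> = F (g x) + F (sum g A)"
  proof -
    have "g x \<in> sym_mats" "sum g A \<in> sym_mats" using insert sym_sum by auto
    then show ?thesis using assms(1) unfolding additive_on_def by blast
  qed
  finally show ?case using insert by simp
qed

lemma dd: "(\<Sum>i\<in>UNIV. \<Sum>j\<in>UNIV. if i = r then (if j = c then v else 0) else 0) = (v::'a::comm_monoid_add)"
  for r c :: "'n::finite"
proof -
  have "(\<Sum>j\<in>UNIV. if i = r then (if j = c then v else 0) else 0) = (if i = r then v else 0)" for i
    by (cases "i = r") auto
  then show ?thesis by simp
qed

lemma decomp:
  fixes M :: "'a::field^'n::finite^'n" and ord :: "'n \<Rightarrow> nat"
  assumes "inj ord" "M \<in> sym_mats"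
  shows "M = (\<Sum>i\<in>UNIV. \<Sum>j\<in>UNIV. if ord i \<le> ord j then B i j (M$i$j) else 0)"
proof -
  have "(\<Sum>i\<in>UNIV. \<Sum>j\<in>UNIV. if ord i \<le> ord j then B i j (M$i$j) else 0) $ r $ c = M $ r $ c" for r c
  proof -
    have e: "(if ord i \<le> ord j then B i j (M$i$j) else 0) $ r $ c =
       (if i = r then (if j = c then (if ord r \<le> ord c then M$r$c else 0) else 0) else 0)
     + (if i = c then (if j = r then (if ord c \<le> ord r \<and> r \<noteq> c then M$c$r else 0) else 0) else 0)" for i j
      unfolding B_def by auto
    have "(\<Sum>i\<in>UNIV. \<Sum>j\<in>UNIV. if ord i \<le> ord j then B i j (M$i$j) else 0) $ r $ c
        = (if ord r \<le> ord c then M$r$c else 0) + (if ord c \<le> ord r \<and> r \<noteq> c then M$c$r else 0)"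
      by (simp only: e sum.distrib sum_component dd)
    also have "\<dots> = M $ r $ c"
    proof (cases "r = c")
      case True then show ?thesis by simp
    next
      case False
      then have "ord r \<noteq> ord c" using assms(1) unfolding inj_def by blast
      then show ?thesis using False assms(2) unfolding sym_iff by (cases "ord r < ord c") auto
    qed
    finally show ?thesis .
  qed
  then show ?thesis by (simp add: vec_eq_iff)
qed

lemma vanish:
  fixes D :: "'a::field^'n::finite^'n \<Rightarrow> 'a^'n"
  assumes "additive_on sym_mats D" "\<And>i j a. D (B i j a) = 0" "M \<in> sym_mats"
  shows "D M = 0"
proof -
  obtain ord :: "'n \<Rightarrow> nat" and k where "inj_on ord UNIV"
    using finite_imp_inj_to_nat_seg[of "UNIV :: 'n set"] by auto
  then have io: "inj ord" by simp
  have mem: "(if ord i \<le> ord j then B i j (M$i$j) else 0) \<in> sym_mats" for i j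
    using B_sym sym_zero by auto
  have "D M = D (\<Sum>i\<in>UNIV. \<Sum>j\<in>UNIV. if ord i \<le> ord j then B i j (M$i$j) else 0)"
    using decomp[OF io assms(3)] by simp
  also have "\<dots> = (\<Sum>i\<in>UNIV. D (\<Sum>j\<in>UNIV. if ord i \<le> ord j then B i j (M$i$j) else 0))"
    by (rule add_sum[OF assms(1)]) (auto intro!: sym_sum mem simp del: B_def)
  also have "\<dots> = (\<Sum>i\<in>UNIV. \<Sum>j\<in>UNIV. D (if ord i \<le> ord j then B i j (M$i$j) else 0))"
    by (intro sum.cong refl add_sum[OF assms(1)]) (simp_all add: mem)
  also have "\<dots> = 0"
    using assms(2) add_zero[OF assms(1)] by (intro sum.neutral ballI) auto
  finally show ?thesis .
qed

lemma Bv: "(B i j a *v v) $ k = (if k = i then a * v$j else if k = j then a * v$i else 0)"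
proof -
  have "(B i j a *v v) $ k = (\<Sum>c\<in>UNIV. (if (k = i \<and> c = j) \<or> (k = j \<and> c = i) then a else 0) * v$c)"
    unfolding B_def matrix_vector_mult_def by simp
  also have "\<dots> = (\<Sum>c\<in>UNIV. if c = (if k = i then j else i) then (if k = i \<or> k = j then a * v$c else 0) else 0)"
    by (intro sum.cong refl) auto
  also have "\<dots> = (if k = i then a * v$j else if k = j then a * v$i else 0)"
    by (simp add: sum.delta)
  finally show ?thesis .
qed

lemma addf:
  assumes "\<forall>x y. g (x + y) = g x + g (y::'a::ab_group_add)"
  shows "g 0 = (0::'b::ab_group_add)" "g (- x) = - g x"
proof -
  show g0: "g 0 = 0" using assms[rule_format, of 0 0] by simp
  show "g (- x) = - g x" using assms[rule_format, of x "-x"] g0 by (metis add.commute eq_neg_iff_add_eq_0)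
qed

lemma two_zero_iff: "((2::'a::field) = 0) \<longleftrightarrow> CHAR('a) = 2"
proof
  assume "(2::'a) = 0"
  then have "of_nat 2 = (0::'a)" by simp
  then have d: "CHAR('a) dvd 2" by (simp only: of_nat_eq_0_iff_char_dvd)
  have "CHAR('a) \<noteq> 0" using d by (intro notI) simp
  then have "CHAR('a) > 0" by simp
  moreover have "CHAR('a) \<le> 2" using d by (rule dvd_imp_le) simp
  moreover have "CHAR('a) \<noteq> 1" using CHAR_not_1 by simp
  ultimately show "CHAR('a) = 2" by linarith
next
  assume "CHAR('a) = 2"
  then have "of_nat 2 = (0::'a)" by (simp only: of_nat_eq_0_iff_char_dvd) simp
  then show "(2::'a) = 0" by simp
qed

lemma rc_ex: "range_compatible sym_mats F \<Longrightarrow> M \<in> sym_mats \<Longrightarrow> \<exists>v. F M = M *v v"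
  unfolding range_compatible_def by blast

lemma F_B_out:
  assumes "range_compatible sym_mats F" "k \<noteq> i" "k \<noteq> j"
  shows "F (B i j a) $ k = 0"
proof -
  obtain v where "F (B i j a) = B i j a *v v" using rc_ex[OF assms(1) B_sym] by blast
  then show ?thesis using assms(2,3) by (simp add: Bv)
qed


lemma final_form:
  fixes F :: "'a::field^'n::finite^'n \<Rightarrow> 'a^'n"
  assumes add: "additive_on sym_mats F" and rc: "range_compatible sym_mats F"
    and fX: "\<And>i a. F (B i i a) $ i = a * X$i + \<alpha> a"
    and hX: "\<And>i j a. i \<noteq> j \<Longrightarrow> F (B i j a) $ i = a * X$j"
    and aadd: "\<And>x y. \<alpha> (x + y) = \<alpha> x + \<alpha> y"
  shows "\<forall>M\<in>sym_mats. F M = M *v X + (\<chi> i. \<alpha> (M $ i $ i))"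
proof -
  have a0: "\<alpha> 0 = 0" using aadd[of 0 0] by (metis add.right_neutral add_left_cancel)
  define D where "D M = F M - (M *v X + (\<chi> i. \<alpha> (M $ i $ i)))" for M
  have Dk: "D M $ k = F M $ k - ((M *v X) $ k + \<alpha> (M $ k $ k))" for M k
    unfolding D_def by simp
  have Dadd: "additive_on sym_mats D"
    unfolding additive_on_def
  proof (intro ballI)
    fix M N :: "'a^'n^'n" assume "M \<in> sym_mats" "N \<in> sym_mats"
    then have e: "F (M + N) = F M + F N" using add unfolding additive_on_def by blast
    have "D (M + N) $ k = D M $ k + D N $ k" for k
    proof -
      have "D (M + N) $ k = (F M $ k + F N $ k) - ((M *v X) $ k + (N *v X) $ k + (\<alpha> (M $ k $ k) + \<alpha> (N $ k $ k)))"
        unfolding Dk e by (simp add: matrix_vector_mult_add_rdistrib aadd)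
      then show ?thesis unfolding Dk by (simp add: algebra_simps)
    qed
    then show "D (M + N) = D M + D N" by (simp add: vec_eq_iff)
  qed
  have DB: "D (B i j a) = 0" for i j a
  proof -
    have "D (B i j a) $ k = 0" for k
    proof (cases "i = j")
      case True
      have Fv: "F (B i j a) $ k = (if k = i then a * X$i + \<alpha> a else 0)"
      proof (cases "k = i")
        case True
        then show ?thesis using fX[of i a] \<open>i = j\<close> by simp
      next
        case False
        then show ?thesis using F_B_out[OF rc False, of j a] \<open>i = j\<close> by simp
      qed
      show ?thesis unfolding Dk Fv Bv B_nth using True a0 by simp
    next
      case False
      have Fv: "F (B i j a) $ k = (if k = i then a * X$j else if k = j then a * X$i else 0)"
      proof -
        have "F (B i j a) $ i = a * X$j" using hX[OF False, of a] .
        moreover have "F (B i j a) $ j = a * X$i"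
          using hX[of j i a] False B_comm[of j i a] by simp
        moreover have "k \<noteq> i \<Longrightarrow> k \<noteq> j \<Longrightarrow> F (B i j a) $ k = 0" using F_B_out[OF rc] by blast
        ultimately show ?thesis by simp
      qed
      show ?thesis unfolding Dk Fv Bv B_nth using False a0 by auto
    qed
    then show ?thesis by (simp add: vec_eq_iff)
  qed
  show ?thesis
  proof
    fix M :: "'a^'n^'n" assume "M \<in> sym_mats"
    then have "D M = 0" using vanish[OF Dadd DB] by blast
    then show "F M = M *v X + (\<chi> i. \<alpha> (M $ i $ i))" unfolding D_def by simp
  qed
qed

lemma forward:
  fixes F :: "'a::field^'n::finite^'n \<Rightarrow> 'a^'n"
  assumes card: "CARD('n) \<ge> 2" and add: "additive_on sym_mats F" and rc: "range_compatible sym_mats F"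
  shows "\<exists>X \<alpha>. root_linear \<alpha> \<and> (CHAR('a) \<noteq> 2 \<longrightarrow> (\<forall>x. \<alpha> x = 0)) \<and>
           (\<forall>M\<in>sym_mats. F M = M *v X + (\<chi> i. \<alpha> (M $ i $ i)))"
proof -
  define f where "f i a = F (B i i a) $ i" for i a
  define h where "h i j a = F (B i j a) $ i" for i j a
  have other: "\<exists>i::'n. i \<noteq> j" for j
  proof (rule ccontr)
    assume "\<not> (\<exists>i::'n. i \<noteq> j)"
    then have "(UNIV::'n set) = {j}" by auto
    then have "CARD('n) = card {j}" by (rule arg_cong)
    then have "CARD('n) = 1" by simp
    then show False using card by simp
  qed
  have FBadd: "F (B i j (a + b)) = F (B i j a) + F (B i j b)" for i j a b
    using add B_sym unfolding additive_on_def B_add by blast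
  have fadd: "\<forall>x y. f i (x + y) = f i x + f i y" for i
    unfolding f_def FBadd by simp
  have hadd: "\<forall>x y. h i j (x + y) = h i j x + h i j y" for i j
    unfolding h_def FBadd by simp
  have E: "h j i (a*t) + f j (a*t*t) = t * (f i a + h i j (a*t))" if ij: "i \<noteq> j" for i j a t
  proof -
    define R where "R = B i i a + B i j (a*t) + B j j (a*t*t)"
    have Rs: "R \<in> sym_mats" unfolding R_def by (intro sym_add B_sym)
    have FR: "F R = F (B i i a) + F (B i j (a*t)) + F (B j j (a*t*t))"
      unfolding R_def using add B_sym sym_add unfolding additive_on_def by metis
    obtain v where v: "F R = R *v v" using rc_ex[OF rc Rs] by blast
    have "(R *v v) $ j = t * (R *v v) $ i"
      unfolding R_def using ij by (simp add: matrix_vector_mult_add_rdistrib Bv algebra_simps)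
    moreover have "F R $ i = f i a + h i j (a*t)"
      using FR F_B_out[OF rc, of i j j] ij by (simp add: f_def h_def)
    moreover have "F R $ j = h j i (a*t) + f j (a*t*t)"
      using FR F_B_out[OF rc, of j i i] ij by (simp add: f_def h_def B_comm)
    ultimately show ?thesis using v by simp
  qed
  have star: "f j (a*t) + f j (a*t) = t * h i j a + h i j (a*t)" if ij: "i \<noteq> j" for i j a t
  proof -
    have e1: "h j i (a*(t+1)) + f j (a*(t+1)*(t+1)) = (t+1) * (f i a + h i j (a*(t+1)))" using E[OF ij] .
    have e2: "h j i (a*t) + f j (a*t*t) = t * (f i a + h i j (a*t))" using E[OF ij] .
    have e3: "h j i (a*1) + f j (a*1*1) = 1 * (f i a + h i j (a*1))" using E[OF ij] .
    have s1: "h j i (a*(t+1)) = h j i (a*t) + h j i (a*1)"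
      using hadd[rule_format, of j i "a*t" "a*1"] by (simp add: algebra_simps)
    have s2: "h i j (a*(t+1)) = h i j (a*t) + h i j (a*1)"
      using hadd[rule_format, of i j "a*t" "a*1"] by (simp add: algebra_simps)
    have s3: "f j (a*(t+1)*(t+1)) = f j (a*t*t) + f j (a*1*1) + f j (a*t) + f j (a*t)"
    proof -
      have "a*(t+1)*(t+1) = a*t*t + a*1*1 + a*t + a*t" by (simp add: algebra_simps)
      then show ?thesis by (simp only: fadd[of j, rule_format])
    qed
    have e1': "(h j i (a*t) + h j i (a*1)) + (f j (a*t*t) + f j (a*1*1) + f j (a*t) + f j (a*t))
       = (t+1) * (f i a + (h i j (a*t) + h i j (a*1)))" using e1 unfolding s1 s2 s3 .
    have "((h j i (a*t) + h j i (a*1)) + (f j (a*t*t) + f j (a*1*1) + f j (a*t) + f j (a*t)))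
        - (h j i (a*t) + f j (a*t*t)) - (h j i (a*1) + f j (a*1*1))
       = (t+1) * (f i a + (h i j (a*t) + h i j (a*1))) - t * (f i a + h i j (a*t)) - 1 * (f i a + h i j (a*1))"
      by (simp only: e1' e2 e3)
    then show ?thesis by (simp add: algebra_simps)
  qed
  have claim: "\<exists>X \<alpha>. (CHAR('a) \<noteq> 2 \<longrightarrow> (\<forall>x. \<alpha> x = 0)) \<and> (\<forall>i a. f i a = a * X$i + \<alpha> a)
      \<and> (\<forall>i j a. i \<noteq> j \<longrightarrow> h i j a = a * X$j)"
  proof (cases "CHAR('a) = 2")
    case False
    then have two: "(2::'a) \<noteq> 0" using two_zero_iff by blast
    have hf: "h i j a = f j a" if ij: "i \<noteq> j" for i j a
    proof -
      have e1: "h j i (a*1) + f j (a*1*1) = 1 * (f i a + h i j (a*1))" using E[OF ij] .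
      have e2: "h j i (a*(-1)) + f j (a*(-1)*(-1)) = (-1) * (f i a + h i j (a*(-1)))" using E[OF ij] .
      have n1: "h j i (- a) = - h j i a" "h i j (- a) = - h i j a"
        using addf(2)[OF hadd] by auto
      have q1: "h j i a + f j a = f i a + h i j a" using e1 by simp
      have q2: "f i a + f j a = h i j a + h j i a" using e2 n1 by (simp add: algebra_simps)
      have q: "(h j i a + f j a) + (f i a + f j a) = (f i a + h i j a) + (h i j a + h j i a)"
        by (simp only: q1 q2)
      have "2 * (f j a - h i j a) = ((h j i a + f j a) + (f i a + f j a)) - ((f i a + h i j a) + (h i j a + h j i a))"
        by (simp add: algebra_simps)
      also have "\<dots> = 0" using q by simp
      finally show ?thesis using two by simp
    qed
    have fl: "f j a = a * f j 1" for j a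
    proof -
      obtain i where ij: "i \<noteq> j" using other by blast
      have "f j (1*a) + f j (1*a) = a * h i j 1 + h i j (1*a)" using star[OF ij] .
      then show ?thesis using hf[OF ij] by (simp add: algebra_simps)
    qed
    define X :: "'a^'n" where "X = (\<chi> j. f j 1)"
    have fX: "f j a = a * X$j" for j a unfolding X_def using fl[of j a] by simp
    have hX: "h i j a = a * X$j" if "i \<noteq> j" for i j a using hf[OF that] fX by simp
    show ?thesis
      by (rule exI[of _ X], rule exI[of _ "\<lambda>_. 0"]) (simp add: fX hX)
  next
    case True
    then have two: "(2::'a) = 0" using two_zero_iff by blast
    have xx: "x + x = 0" for x :: 'a
    proof -
      have "x + x = 2 * x" by simp
      then show ?thesis using two by simp
    qed
    have neg: "- x = x" for x :: 'a using xx[of x] by (metis add_implies_diff diff_0)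
    have hl: "h i j t = t * h i j 1" if ij: "i \<noteq> j" for i j t
    proof -
      have "f j (1*t) + f j (1*t) = t * h i j 1 + h i j (1*t)" using star[OF ij] .
      then have "t * h i j 1 + h i j t = 0" using xx by simp
      then have "h i j t = - (t * h i j 1)" by (simp add: eq_neg_iff_add_eq_0 add.commute)
      then show ?thesis using neg by simp
    qed
    have three: "h i j 1 = h k j 1" if d: "i \<noteq> j" "k \<noteq> j" "i \<noteq> k" for i j k
    proof -
      define M where "M = B i j (1::'a) + B k j 1"
      have Ms: "M \<in> sym_mats" unfolding M_def by (intro sym_add B_sym)
      have FM: "F M = F (B i j 1) + F (B k j 1)"
        unfolding M_def using add B_sym unfolding additive_on_def by metis
      obtain v where v: "F M = M *v v" using rc_ex[OF rc Ms] by blast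
      have "(M *v v) $ i = (M *v v) $ k"
        unfolding M_def using d by (simp add: matrix_vector_mult_add_rdistrib Bv)
      moreover have "F M $ i = h i j 1" using FM F_B_out[OF rc, of i k j] d by (simp add: h_def)
      moreover have "F M $ k = h k j 1" using FM F_B_out[OF rc, of k i j] d by (simp add: h_def)
      ultimately show ?thesis using v by simp
    qed
    define X :: "'a^'n" where "X = (\<chi> j. h (SOME i. i \<noteq> j) j 1)"
    have hX: "h i j a = a * X$j" if ij: "i \<noteq> j" for i j a
    proof -
      have s: "(SOME i. i \<noteq> j) \<noteq> j" using other[of j] by (rule someI_ex)
      have "h i j 1 = h (SOME i. i \<noteq> j) j 1"
        using three[OF ij s] by (cases "i = (SOME i. i \<noteq> j)") auto
      then show ?thesis using hl[OF ij, of a] unfolding X_def by simp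
    qed
    obtain j0 :: 'n where True by blast
    define \<alpha> where "\<alpha> a = f j0 a - a * X$j0" for a
    have fX: "f i a = a * X$i + \<alpha> a" for i a
    proof (cases "i = j0")
      case True then show ?thesis unfolding \<alpha>_def by simp
    next
      case False
      have "h j0 i (a*1) + f j0 (a*1*1) = 1 * (f i a + h i j0 (a*1))" using E[OF False] .
      then show ?thesis using hX[OF False] hX[of j0 i] False unfolding \<alpha>_def by (simp add: algebra_simps)
    qed
    show ?thesis using True fX hX by blast
  qed
  then obtain X \<alpha> where H: "(CHAR('a) \<noteq> 2 \<longrightarrow> (\<forall>x. \<alpha> x = 0)) \<and> (\<forall>i a. f i a = a * X$i + \<alpha> a)
      \<and> (\<forall>i j a. i \<noteq> j \<longrightarrow> h i j a = a * X$j)" by (elim exE)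
  have c2: "CHAR('a) \<noteq> 2 \<longrightarrow> (\<forall>x. \<alpha> x = 0)" using H by (rule conjunct1)
  have fX': "\<forall>i a. f i a = a * X$i + \<alpha> a" using H by (rule conjunct1[OF conjunct2])
  have hX': "\<forall>i j a. i \<noteq> j \<longrightarrow> h i j a = a * X$j" using H by (rule conjunct2[OF conjunct2])
  have fX: "f i a = a * X$i + \<alpha> a" for i a using fX' by blast
  have hX: "h i j a = a * X$j" if "i \<noteq> j" for i j a using hX' that by blast
  obtain j0 :: 'n where True by blast
  have ae: "\<alpha> a = f i a - a * X$i" for i a using fX[of i a] by simp
  have aadd: "\<alpha> (x + y) = \<alpha> x + \<alpha> y" for x y
  proof -
    have "\<alpha> (x + y) = f j0 (x + y) - (x + y) * X$j0" by (rule ae)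
    also have "\<dots> = (f j0 x - x * X$j0) + (f j0 y - y * X$j0)"
      unfolding fadd[of j0, rule_format] by (simp add: algebra_simps)
    also have "\<dots> = \<alpha> x + \<alpha> y" by (simp only: ae[symmetric])
    finally show ?thesis .
  qed
  have aroot: "\<alpha> (l^2 * x) = l * \<alpha> x" for l x
  proof -
    obtain i where ij: "i \<noteq> j0" using other by blast
    have Ei: "h j0 i (x*l) + f j0 (x*l*l) = l * (f i x + h i j0 (x*l))" using E[OF ij] .
    have fj: "f j0 (x*l*l) = l * (f i x + h i j0 (x*l)) - h j0 i (x*l)"
      using Ei by (metis add_diff_cancel_left')
    have "\<alpha> (x*l*l) = f j0 (x*l*l) - x*l*l * X$j0" by (rule ae)
    also have "\<dots> = l * ((x * X$i + \<alpha> x) + (x*l) * X$j0) - (x*l) * X$i - x*l*l * X$j0"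
      unfolding fj fX[of i x] hX[OF ij] hX[of j0 i, OF ij[symmetric]] by (rule refl)
    also have "\<dots> = l * \<alpha> x" by (simp add: algebra_simps)
    finally have a1: "\<alpha> (x*l*l) = l * \<alpha> x" .
    have eq: "l^2 * x = x*l*l" by (simp add: power2_eq_square)
    show ?thesis unfolding eq by (rule a1)
  qed
  have rl: "root_linear \<alpha>" unfolding root_linear_def using aadd aroot by blast
  have fX2: "F (B i i a) $ i = a * X$i + \<alpha> a" for i a using fX[of i a] unfolding f_def .
  have hX2: "F (B i j a) $ i = a * X$j" if "i \<noteq> j" for i j a using hX[OF that, of a] unfolding h_def .
  have "\<forall>M\<in>sym_mats. F M = M *v X + (\<chi> i. \<alpha> (M $ i $ i))"
    by (rule final_form[OF add rc fX2 hX2 aadd])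
  then show ?thesis using rl c2 by blast
qed


lemma range_subspace: "vec.subspace (range (\<lambda>x. (M::'a::field^'n::finite^'m::finite) *v x))"
  using vec.subspace_image[OF vec.subspace_UNIV, of M] by simp

lemma diag_in_range:
  fixes M :: "'a::field^'n::finite^'n"
  assumes two: "(2::'a) = 0" and rl: "root_linear \<alpha>" and Ms: "M \<in> sym_mats"
  shows "(\<chi> i. \<alpha> (M $ i $ i)) \<in> range (\<lambda>x. M *v x)"
proof (rule ccontr)
  define y where "y = (\<chi> i. \<alpha> (M $ i $ i))"
  define W where "W = range (\<lambda>x. M *v x)"
  assume "y \<notin> range (\<lambda>x. M *v x)"
  then have yW: "y \<notin> W" unfolding W_def y_def by simp
  have Wsub: "vec.subspace W" unfolding W_def by (rule range_subspace)
  obtain Bs where Bs: "Bs \<subseteq> W" "vec.independent Bs" "W \<subseteq> vec.span Bs"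
    using vec.maximal_independent_subset[of W] by blast
  have spB: "vec.span Bs \<subseteq> W" using vec.span_minimal[OF Bs(1) Wsub] .
  have ysp: "y \<notin> vec.span Bs" using spB yW by blast
  have yB: "y \<notin> Bs" using Bs(1) yW by blast
  have ind: "vec.independent (insert y Bs)"
    using vec.independent_insert[of y Bs] Bs(2) ysp yB by simp
  interpret pr: vector_space_pair "(*s) :: 'a \<Rightarrow> 'a^'n \<Rightarrow> 'a^'n" "(*) :: 'a \<Rightarrow> 'a \<Rightarrow> 'a" ..
  obtain g where lin: "Vector_Spaces.linear (*s) (*) g"
      and gv: "\<forall>x\<in>insert y Bs. g x = (if x = y then 1 else 0)"
    using pr.linear_independent_extend[OF ind, of "\<lambda>x. if x = y then 1 else 0"] by blast
  interpret gl: Vector_Spaces.linear "(*s) :: 'a \<Rightarrow> 'a^'n \<Rightarrow> 'a^'n" "(*) :: 'a \<Rightarrow> 'a \<Rightarrow> 'a" g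
    by (rule lin)
  have gy: "g y = 1" using gv by simp
  have gB: "Bs \<subseteq> {x. g x = 0}" using gv yB by auto
  have gW: "g w = 0" if "w \<in> W" for w
    using vec.span_minimal[OF gB gl.subspace_kernel] Bs(3) that by blast
  define z :: "'a^'n" where "z = (\<chi> i. g (axis i 1))"
  have gz: "g w = (\<Sum>i\<in>UNIV. w$i * z$i)" for w
  proof -
    have "g w = g (\<Sum>i\<in>UNIV. w$i *s axis i 1)" by (simp add: basis_expansion)
    also have "\<dots> = (\<Sum>i\<in>UNIV. w$i * z$i)" by (simp add: gl.sum gl.scale z_def)
    finally show ?thesis .
  qed
  have col: "(\<Sum>i\<in>UNIV. M$k$i * z$i) = 0" for k
  proof -
    have "g (M *v axis k 1) = 0" using gW unfolding W_def by blast
    moreover have "M *v axis k 1 = (\<chi> i. M $ i $ k)"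
      by (simp add: vec_eq_iff matrix_vector_mult_def axis_def if_distrib cong: if_cong)
    ultimately have "(\<Sum>i\<in>UNIV. M$i$k * z$i) = 0" using gz by simp
    then show ?thesis using Ms unfolding sym_iff by simp
  qed
  obtain ord :: "'n \<Rightarrow> nat" and k where "inj_on ord UNIV"
    using finite_imp_inj_to_nat_seg[of "UNIV :: 'n set"] by auto
  then have io: "inj ord" by simp
  define q where "q i j = z$i * M$i$j * z$j" for i j
  have qs: "q i j = q j i" for i j using Ms unfolding sym_iff q_def by (simp add: ac_simps)
  have Q0: "(\<Sum>i\<in>UNIV. \<Sum>j\<in>UNIV. q i j) = 0"
  proof -
    have "(\<Sum>i\<in>UNIV. \<Sum>j\<in>UNIV. q i j) = (\<Sum>i\<in>UNIV. z$i * (\<Sum>j\<in>UNIV. M$i$j * z$j))"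
      by (simp add: q_def sum_distrib_left mult.assoc)
    also have "\<dots> = 0" using col by simp
    finally show ?thesis .
  qed
  have split: "q i j = (if i = j then q i i else 0) + (if ord i < ord j then q i j else 0) + (if ord j < ord i then q i j else 0)" for i j
  proof (cases "i = j")
    case False
    then have "ord i \<noteq> ord j" using io unfolding inj_def by blast
    then show ?thesis using False by (cases "ord i < ord j") auto
  qed simp
  have "(\<Sum>i\<in>UNIV. \<Sum>j\<in>UNIV. if ord j < ord i then q i j else 0) = (\<Sum>j\<in>UNIV. \<Sum>i\<in>UNIV. if ord j < ord i then q i j else 0)"
    by (rule sum.swap)
  also have "\<dots> = (\<Sum>i\<in>UNIV. \<Sum>j\<in>UNIV. if ord i < ord j then q i j else 0)"
    by (intro sum.cong refl) (metis qs)
  finally have sw: "(\<Sum>i\<in>UNIV. \<Sum>j\<in>UNIV. if ord j < ord i then q i j else 0) = (\<Sum>i\<in>UNIV. \<Sum>j\<in>UNIV. if ord i < ord j then q i j else 0)" .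
  have "(\<Sum>i\<in>UNIV. \<Sum>j\<in>UNIV. q i j) = (\<Sum>i\<in>UNIV. q i i) + 2 * (\<Sum>i\<in>UNIV. \<Sum>j\<in>UNIV. if ord i < ord j then q i j else 0)"
  proof -
    have "(\<Sum>i\<in>UNIV. \<Sum>j\<in>UNIV. q i j) = (\<Sum>i\<in>UNIV. \<Sum>j\<in>UNIV. (if i = j then q i i else 0) + (if ord i < ord j then q i j else 0) + (if ord j < ord i then q i j else 0))"
      by (rule sum.cong[OF refl], rule sum.cong[OF refl], rule split)
    also have "\<dots> = (\<Sum>i\<in>UNIV. \<Sum>j\<in>UNIV. (if i = j then q i i else 0)) + (\<Sum>i\<in>UNIV. \<Sum>j\<in>UNIV. if ord i < ord j then q i j else 0) + (\<Sum>i\<in>UNIV. \<Sum>j\<in>UNIV. if ord j < ord i then q i j else 0)"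
      by (simp only: sum.distrib)
    also have "(\<Sum>i\<in>UNIV. \<Sum>j\<in>UNIV. (if i = j then q i i else 0)) = (\<Sum>i\<in>UNIV. q i i)"
      by (rule sum.cong[OF refl]) (simp add: sum.delta)
    finally show ?thesis unfolding sw mult_2 by (simp only: add.assoc)
  qed
  then have "(\<Sum>i\<in>UNIV. q i i) = 0" using Q0 two by simp
  moreover have "q i i = z$i * z$i * M$i$i" for i unfolding q_def by (simp add: ac_simps)
  ultimately have diag0: "(\<Sum>i\<in>UNIV. z$i * z$i * M$i$i) = 0" by simp
  have aadd: "\<alpha> (a + b) = \<alpha> a + \<alpha> b" for a b using rl unfolding root_linear_def by blast
  have aroot: "\<alpha> (l^2 * a) = l * \<alpha> a" for l a using rl unfolding root_linear_def by blast
  have a0: "\<alpha> 0 = 0" using aadd[of 0 0] by (metis add.right_neutral add_left_cancel)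
  have asum: "\<alpha> (sum u A) = (\<Sum>x\<in>A. \<alpha> (u x))" for u and A :: "'n set"
    by (induction A rule: infinite_finite_induct) (simp_all add: a0 aadd)
  have "g y = (\<Sum>i\<in>UNIV. \<alpha> (M $ i $ i) * z$i)" unfolding y_def gz by simp
  also have "\<dots> = (\<Sum>i\<in>UNIV. \<alpha> (z$i * z$i * M$i$i))"
  proof (rule sum.cong[OF refl])
    fix i
    have e: "z$i * z$i * M$i$i = (z$i)^2 * M$i$i" by (simp add: power2_eq_square)
    have "\<alpha> (z$i * z$i * M$i$i) = z$i * \<alpha> (M$i$i)" unfolding e by (rule aroot)
    then show "\<alpha> (M $ i $ i) * z$i = \<alpha> (z$i * z$i * M$i$i)" by (simp add: mult.commute)
  qed
  also have "\<dots> = \<alpha> (\<Sum>i\<in>UNIV. z$i * z$i * M$i$i)" by (rule asum[symmetric])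
  also have "\<dots> = 0" using diag0 a0 by simp
  finally show False using gy by simp
qed

lemma backward:
  fixes F :: "'a::field^'n::finite^'n \<Rightarrow> 'a^'n"
  assumes two: "(2::'a) = 0" and rl: "root_linear \<alpha>"
    and FX: "\<forall>M\<in>sym_mats. F M = M *v X + (\<chi> i. \<alpha> (M $ i $ i))"
  shows "additive_on sym_mats F \<and> range_compatible sym_mats F"
proof
  have aadd: "\<alpha> (a + b) = \<alpha> a + \<alpha> b" for a b using rl unfolding root_linear_def by blast
  show "additive_on sym_mats F"
    unfolding additive_on_def
  proof (intro ballI)
    fix M N :: "'a^'n^'n" assume "M \<in> sym_mats" "N \<in> sym_mats"
    moreover then have "M + N \<in> sym_mats" by (rule sym_add)
    ultimately have e: "F (M + N) = (M + N) *v X + (\<chi> i. \<alpha> ((M + N) $ i $ i))"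
      "F M = M *v X + (\<chi> i. \<alpha> (M $ i $ i))" "F N = N *v X + (\<chi> i. \<alpha> (N $ i $ i))"
      using FX by blast+
    show "F (M + N) = F M + F N"
      unfolding e by (simp add: matrix_vector_mult_add_rdistrib aadd vec_eq_iff algebra_simps)
  qed
  show "range_compatible sym_mats F"
    unfolding range_compatible_def
  proof
    fix M :: "'a^'n^'n" assume Ms: "M \<in> sym_mats"
    obtain w where "(\<chi> i. \<alpha> (M $ i $ i)) = M *v w" using diag_in_range[OF two rl Ms] by blast
    then have "F M = M *v (X + w)" using FX Ms by (simp add: matrix_vector_right_distrib)
    then show "F M \<in> range (\<lambda>x. M *v x)" by auto
  qed
qed


lemma alpha_zero:
  fixes F :: "'a::field^'n::finite^'n \<Rightarrow> 'a^'n"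
  assumes lin: "linear_on sym_mats F" and rl: "root_linear \<alpha>"
    and FX: "\<forall>M\<in>sym_mats. F M = M *v X + (\<chi> i. \<alpha> (M $ i $ i))"
    and c: "(c::'a) \<noteq> 0" "c \<noteq> 1"
  shows "\<alpha> x = 0"
proof -
  obtain j0 :: 'n where True by blast
  have ev: "F (B j0 j0 a) $ j0 = a * X$j0 + \<alpha> a" for a
    using FX B_sym[of j0 j0 a] by (simp add: Bv B_nth)
  have sc: "\<alpha> (c * y) = c * \<alpha> y" for y
  proof -
    have "(\<chi> i j. c * B j0 j0 y $ i $ j) = B j0 j0 (c * y)"
      by (simp add: vec_eq_iff B_nth)
    moreover have "F (\<chi> i j. c * B j0 j0 y $ i $ j) = c *s F (B j0 j0 y)"
      using lin B_sym unfolding linear_on_def by blast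
    ultimately have "F (B j0 j0 (c * y)) $ j0 = c * F (B j0 j0 y) $ j0" by simp
    then show ?thesis unfolding ev by (simp add: algebra_simps)
  qed
  have "\<alpha> (c^2 * x) = c * \<alpha> x" using rl unfolding root_linear_def by blast
  moreover have "\<alpha> (c^2 * x) = c * (c * \<alpha> x)"
    using sc[of "c * x"] sc[of x] by (simp add: power2_eq_square mult.assoc)
  ultimately have "c * (c * \<alpha> x) - c * \<alpha> x = 0" by simp
  then have "c * ((c - 1) * \<alpha> x) = 0" by (simp add: algebra_simps)
  then show ?thesis using c by simp
qed

theorem theorem1p10:
  fixes dummy :: "'a::field ^'n ^'n"
  assumes "CARD('n) \<ge> 2"
  shows "(CHAR('a) \<noteq> 2 \<longrightarrow>
           (\<forall>F :: 'a ^'n ^'n \<Rightarrow> 'a ^'n.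
              additive_on sym_mats F \<and> range_compatible sym_mats F \<longrightarrow> local_map sym_mats F))
       \<and> (CHAR('a) = 2 \<longrightarrow>
           (\<forall>F :: 'a ^'n ^'n \<Rightarrow> 'a ^'n.
              additive_on sym_mats F \<and> range_compatible sym_mats F \<longleftrightarrow>
              (\<exists>X \<alpha>. root_linear \<alpha> \<and>
                 (\<forall>M\<in>sym_mats. F M = M *v X + (\<chi> i. \<alpha> (M $ i $ i))))))
       \<and> ((infinite (UNIV :: 'a set) \<or> card (UNIV :: 'a set) > 2) \<longrightarrow>
           (\<forall>F :: 'a ^'n ^'n \<Rightarrow> 'a ^'n.
              linear_on sym_mats F \<and> range_compatible sym_mats F \<longrightarrow> local_map sym_mats F))"
proof (intro conjI impI allI)
  fix F :: "'a ^'n ^'n \<Rightarrow> 'a ^'n"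
  assume ch: "CHAR('a) \<noteq> 2" and h: "additive_on sym_mats F \<and> range_compatible sym_mats F"
  then obtain X \<alpha> where "(\<forall>x. \<alpha> x = 0)" "\<forall>M\<in>sym_mats. F M = M *v X + (\<chi> i. \<alpha> (M $ i $ i))"
    using forward[OF assms] by blast
  then show "local_map sym_mats F" unfolding local_map_def by (auto simp: vec_eq_iff)
next
  fix F :: "'a ^'n ^'n \<Rightarrow> 'a ^'n"
  assume ch: "CHAR('a) = 2"
  then have two: "(2::'a) = 0" using two_zero_iff by blast
  show "additive_on sym_mats F \<and> range_compatible sym_mats F \<longleftrightarrow>
              (\<exists>X \<alpha>. root_linear \<alpha> \<and> (\<forall>M\<in>sym_mats. F M = M *v X + (\<chi> i. \<alpha> (M $ i $ i))))"
  proof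
    assume "additive_on sym_mats F \<and> range_compatible sym_mats F"
    then show "\<exists>X \<alpha>. root_linear \<alpha> \<and> (\<forall>M\<in>sym_mats. F M = M *v X + (\<chi> i. \<alpha> (M $ i $ i)))"
      using forward[OF assms] by blast
  next
    assume "\<exists>X \<alpha>. root_linear \<alpha> \<and> (\<forall>M\<in>sym_mats. F M = M *v X + (\<chi> i. \<alpha> (M $ i $ i)))"
    then obtain X \<alpha> where "root_linear \<alpha>" "\<forall>M\<in>sym_mats. F M = M *v X + (\<chi> i. \<alpha> (M $ i $ i))" by blast
    then show "additive_on sym_mats F \<and> range_compatible sym_mats F" using backward[OF two] by blast
  qed
next
  fix F :: "'a ^'n ^'n \<Rightarrow> 'a ^'n"
  assume big: "infinite (UNIV :: 'a set) \<or> card (UNIV :: 'a set) > 2"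
    and h: "linear_on sym_mats F \<and> range_compatible sym_mats F"
  have "additive_on sym_mats F" using h unfolding linear_on_def by blast
  then obtain X \<alpha> where rl: "root_linear \<alpha>" and FX: "\<forall>M\<in>sym_mats. F M = M *v X + (\<chi> i. \<alpha> (M $ i $ i))"
    using forward[OF assms] h by blast
  obtain c :: 'a where c: "c \<notin> {0, 1}"
  proof (cases "finite (UNIV :: 'a set)")
    case True
    show ?thesis
    proof (rule ccontr)
      assume "\<not> ?thesis"
      then have "UNIV \<subseteq> {0::'a, 1}" using that by blast
      then have "card (UNIV::'a set) \<le> card {0::'a, 1}" by (rule card_mono[rotated]) simp
      also have "\<dots> \<le> 2" by (simp add: card_insert_le_m1)
      finally show False using big True by simp
    qed
  next
    case False
    then obtain c :: 'a where "c \<notin> {0, 1}" using ex_new_if_finite[of "{0,1}"] by blast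
    then show ?thesis using that by blast
  qed
  have "\<alpha> x = 0" for x using alpha_zero[OF _ rl FX, of c] h c by auto
  then show "local_map sym_mats F" using FX unfolding local_map_def by (auto simp: vec_eq_iff)
qed

end
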